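(* Let $u=a_1\cdots a_n$ be a word over a finite alphabet $A$ and let $i$ be a $c$-position of $u$. Let $P_i$ be the set of all predecessors of $i$, i.e. the set of positions $j$ such that there exists an X-ranker $r\mathsf X_c$ of minimal length among X-rankers reaching $i$ with $r\mathsf X_c(u)=i$ and $r(u)=j$. Then the positions in $P_i$ all have pairwise different labels.
   Context: An X-ranker is a nonempty word over $\{\mathsf X_a : a\in A\}$, length = word length. For a word $w$, $\mathsf X_a(w)$ is the smallest $a$-position of $w$ and $r\mathsf X_a(w)$ the smallest $a$-position greater than $r(w)$ (possibly undefined). The label of position $j$ of $u$ is $a_j$. *)

theory Defs
  imports Main
begin

(* Words are lists; positions are 1-based: position j of u (1 <= j <= length u)
   carries label  u ! (j - 1). *)

definition label :: "'a list \<Rightarrow> nat \<Rightarrow> 'a" where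
  "label u j = u ! (j - 1)"

definition is_pos :: "'a list \<Rightarrow> 'a \<Rightarrow> nat \<Rightarrow> bool" where
  "is_pos u a j \<longleftrightarrow> 1 \<le> j \<and> j \<le> length u \<and> label u j = a"

definition next_pos :: "'a list \<Rightarrow> 'a \<Rightarrow> nat \<Rightarrow> nat option" where
  "next_pos u a p = (if \<exists>j. p < j \<and> is_pos u a j
     then Some (LEAST j. p < j \<and> is_pos u a j) else None)"

(* An X-ranker X_{b1} ... X_{bk} is represented by the nonempty list [b1,...,bk].
   Evaluation: X_a(u) = smallest a-position, (r X_a)(u) = smallest a-position > r(u).
   The empty list evaluates to the dummy position 0 (only used internally). *)
definition eval_ranker :: "'a list \<Rightarrow> 'a list \<Rightarrow> nat option" where
  "eval_ranker r u = fold (\<lambda>a p. Option.bind p (next_pos u a)) r (Some 0)"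

definition reaches :: "'a list \<Rightarrow> 'a list \<Rightarrow> nat \<Rightarrow> bool" where
  "reaches r u i \<longleftrightarrow> r \<noteq> [] \<and> eval_ranker r u = Some i"

definition min_len :: "'a list \<Rightarrow> nat \<Rightarrow> nat" where
  "min_len u i = (LEAST n. \<exists>r. reaches r u i \<and> length r = n)"

definition preds :: "'a list \<Rightarrow> 'a \<Rightarrow> nat \<Rightarrow> nat set" where
  "preds u c i = {j. \<exists>r. r \<noteq> [] \<and> reaches (r @ [c]) u i
      \<and> length (r @ [c]) = min_len u i \<and> eval_ranker r u = Some j}"

end

theory Submission
  imports Defs
begin

lemma eval_snoc: "eval_ranker (s @ [a]) u = Option.bind (eval_ranker s u) (next_pos u a)"
  by (simp add: eval_ranker_def)

lemma next_pos_SomeD: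
  assumes "next_pos u a p = Some q"
  shows "p < q \<and> is_pos u a q \<and> (\<forall>j. p < j \<and> j < q \<longrightarrow> \<not> is_pos u a j)"
proof -
  have ex: "\<exists>j. p < j \<and> is_pos u a j" using assms by (auto simp: next_pos_def split: if_splits)
  have q: "q = (LEAST j. p < j \<and> is_pos u a j)" using assms ex by (auto simp: next_pos_def)
  show ?thesis using LeastI_ex[OF ex] not_less_Least q by blast
qed

lemma next_pos_SomeI:
  assumes "p < q" "is_pos u a q" "\<forall>j. p < j \<and> j < q \<longrightarrow> \<not> is_pos u a j"
  shows "next_pos u a p = Some q"
proof -
  have ex: "\<exists>j. p < j \<and> is_pos u a j" using assms by blast
  have "(LEAST j. p < j \<and> is_pos u a j) = q"
    by (rule Least_equality) (use assms in \<open>auto simp: not_less[symmetric]\<close>)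
  then show ?thesis using ex by (simp add: next_pos_def)
qed

lemma eval_pos:
  assumes "r \<noteq> []" "eval_ranker r u = Some j"
  shows "is_pos u (last r) j"
proof -
  obtain s a where r: "r = s @ [a]" using assms(1) by (metis rev_exhaust)
  then obtain p where "eval_ranker s u = Some p" "next_pos u a p = Some j"
    using assms(2) by (cases "eval_ranker s u") (auto simp: eval_snoc)
  then show ?thesis using next_pos_SomeD r by fastforce
qed

lemma main_aux:
  assumes "j \<in> preds u c i" "k \<in> preds u c i" "j < k" "label u j = label u k"
  shows False
proof -
  obtain r where r: "r \<noteq> []" "reaches (r @ [c]) u i" "length (r @ [c]) = min_len u i"
    "eval_ranker r u = Some j" using assms(1) by (auto simp: preds_def)
  obtain r' where r': "r' \<noteq> []" "reaches (r' @ [c]) u i" "length (r' @ [c]) = min_len u i"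
    "eval_ranker r' u = Some k" using assms(2) by (auto simp: preds_def)
  have ji: "next_pos u c j = Some i" using r(2,4) by (simp add: reaches_def eval_snoc)
  have ki: "next_pos u c k = Some i" using r'(2,4) by (simp add: reaches_def eval_snoc)
  obtain s b where s: "r' = s @ [b]" using r'(1) by (metis rev_exhaust)
  have kpos: "is_pos u b k" using eval_pos[OF r'(1,4)] s by simp
  have jpos0: "is_pos u (last r) j" using eval_pos[OF r(1,4)] .
  have jpos: "is_pos u b j" using jpos0 kpos assms(4) by (auto simp: is_pos_def)
  obtain p where p: "eval_ranker s u = Some p" "next_pos u b p = Some k"
    using r'(4) s by (cases "eval_ranker s u") (auto simp: eval_snoc)
  have pk: "p < k" "\<forall>x. p < x \<and> x < k \<longrightarrow> \<not> is_pos u b x" using next_pos_SomeD[OF p(2)] by auto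
  have jp: "j \<le> p" using pk jpos assms(3) by (meson not_le)
  have D1: "j < i" "\<forall>x. j < x \<and> x < i \<longrightarrow> \<not> is_pos u c x" "is_pos u c i"
    using next_pos_SomeD[OF ji] by auto
  have "k < i" using next_pos_SomeD[OF ki] by auto
  have "next_pos u c p = Some i"
    by (rule next_pos_SomeI) (use D1 jp pk \<open>k < i\<close> in auto)
  then have "reaches (s @ [c]) u i" using p(1) by (simp add: reaches_def eval_snoc)
  then have "min_len u i \<le> length (s @ [c])" unfolding min_len_def using Least_le[of "\<lambda>n. \<exists>r. reaches r u i \<and> length r = n" "length (s @ [c])"] by blast
  then show False using r'(3) s by simp
qed

theorem lemma22:
  fixes u :: "'a::finite list" and c :: 'a and i :: nat
  assumes "is_pos u c i"
  shows "\<forall>j \<in> preds u c i. \<forall>k \<in> preds u c i. j \<noteq> k \<longrightarrow> label u j \<noteq> label u k"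
  using main_aux by (metis linorder_neqE_nat)

end
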